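(* Let $m\ge2$ and let $\mathbb N$ be the directed cycle $1\to2\to\cdots\to m\to1$, where agent $i$ receives $C_ix_{i-1}$ from agent $i-1$ (vertex $0$ being vertex $m$, $x_0:=x_m$), each $C_i$ a real full-row-rank matrix with $n$ columns, and $P_i=C_i'(C_iC_i')^{-1}C_i$. Consider $$x_i(t+1)=x_i(t)-\tfrac12P_i\big(x_i(t)-x_{i-1}(t)\big),\qquad i=1,\dots,m,$$ with initial states satisfying $x_i(0)\in\operatorname{image}P_i$ for every $i$. Then all $x_i(t)$ converge to a common vector $x^*\in\mathbb R^n$ exponentially fast.
   Context: $'$ denotes transpose; $P_i$ is the orthogonal projection onto $(\ker C_i)^\perp$. Exponentially fast: there exist $c>0$, $\rho\in[0,1)$ with $\|x_i(t)-x^*\|\le c\rho^t$ for all $i,t$. *)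

theory Defs
  imports "Jordan_Normal_Form.DL_Rank" "Jordan_Normal_Form.Gauss_Jordan_Elimination"
begin

definition full_row_rank :: "real mat \<Rightarrow> bool" where
  "full_row_rank C \<longleftrightarrow> vec_space.rank (dim_row C) C = dim_row C"

definition proj_mat :: "real mat \<Rightarrow> real mat" where
  "proj_mat C = transpose_mat C * the (mat_inverse (C * transpose_mat C)) * C"

definition mat_image :: "real mat \<Rightarrow> real vec set" where
  "mat_image P = {P *\<^sub>v y | y. y \<in> carrier_vec (dim_col P)}"

definition vnorm :: "real vec \<Rightarrow> real" where
  "vnorm v = sqrt (\<Sum>j<dim_vec v. (v $ j)\<^sup>2)"

definition cyc_prev :: "nat \<Rightarrow> nat \<Rightarrow> nat" where
  "cyc_prev m i = (if i = 1 then m else i - 1)"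

end

theory Submission imports Defs "HOL-Analysis.Function_Topology" begin


lemma gram_inj:
  fixes C :: "real mat"
  assumes Cc: "C \<in> carrier_mat r n" and rk: "vec_space.rank r C = r"
    and v: "v \<in> carrier_vec r" and z: "transpose_mat C *\<^sub>v v = 0\<^sub>v n"
  shows "v = 0\<^sub>v r"
proof -
  interpret vec_space "TYPE(real)" r .
  obtain S where S: "finite S" "maximal S (\<lambda>T. T \<subseteq> set (cols C) \<and> lin_indpt T)"
    using maximal_exists_superset[of "set (cols C)" "(\<lambda>T. T \<subseteq> set (cols C) \<and> lin_indpt T)" "{}"]
    by (metis (no_types) List.finite_set empty_subsetI fin_dim finite_basis_exists subset_li_is_li vec_vs vectorspace.basis_def)
  have cardS: "card S = r" using rank_card_indpt[OF Cc S(2)] rk by simp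
  have Ssub: "S \<subseteq> set (cols C)" "lin_indpt S" using S(2) unfolding maximal_def by auto
  have Scar: "S \<subseteq> carrier_vec r" using Ssub(1) Cc cols_dim by blast
  have "basis S" by (rule dim_li_is_basis[OF fin_dim S(1)]) (use Scar Ssub cardS dim_is_n in auto)
  then have spanS: "span S = carrier_vec r" unfolding basis_def by auto
  have orth: "v \<in> orthogonal_complement S"
    unfolding orthogonal_complement_def
  proof (intro CollectI conjI ballI)
    show "v \<in> carrier_vec r" by fact
    fix y assume "y \<in> S"
    then have "y \<in> set (cols C)" using Ssub(1) by auto
    then obtain j where j: "j < length (cols C)" "y = cols C ! j"
      by (auto simp: in_set_conv_nth)
    then have j: "j < n" "y = col C j" using Cc by auto
    have "(transpose_mat C *\<^sub>v v) $ j = col C j \<bullet> v" using j Cc by auto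
    then have "col C j \<bullet> v = 0" using z j by auto
    then show "v \<bullet> y = 0" using j Cc v comm_scalar_prod[of v r "col C j"] by auto
  qed
  then have "v \<in> orthogonal_complement (span S)" using Scar by simp
  then have "v \<bullet> v = 0" using v spanS unfolding orthogonal_complement_def by auto
  then show ?thesis using v
    using conjugate_square_eq_0_vec[OF v] by simp
qed

lemma proj_props:
  fixes C :: "real mat"
  assumes Cc: "C \<in> carrier_mat r n" and rk: "full_row_rank C"
  shows "proj_mat C \<in> carrier_mat n n \<and> transpose_mat (proj_mat C) = proj_mat C
     \<and> proj_mat C * proj_mat C = proj_mat C"
proof -
  have rk': "vec_space.rank r C = r" using rk Cc unfolding full_row_rank_def by auto
  define G where "G = C * transpose_mat C"
  have Gc: "G \<in> carrier_mat r r" using Cc unfolding G_def by auto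
  have GT: "transpose_mat G = G" unfolding G_def using Cc
    by (simp add: transpose_mult[of C r n "transpose_mat C" r])
  have "Determinant.det G \<noteq> 0"
  proof
    assume "Determinant.det G = 0"
    then obtain v where v: "v \<in> carrier_vec r" "v \<noteq> 0\<^sub>v r" "G *\<^sub>v v = 0\<^sub>v r"
      using det_0_iff_vec_prod_zero_field[OF Gc] by auto
    have w: "transpose_mat C *\<^sub>v v \<in> carrier_vec n" using Cc v by auto
    have "(transpose_mat C *\<^sub>v v) \<bullet> (transpose_mat C *\<^sub>v v) = v \<bullet> (C *\<^sub>v (transpose_mat C *\<^sub>v v))"
      by (rule transpose_vec_mult_scalar[OF Cc w v(1)])
    also have "C *\<^sub>v (transpose_mat C *\<^sub>v v) = G *\<^sub>v v" unfolding G_def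
      using Cc v by (simp add: assoc_mult_mat_vec[of C r n "transpose_mat C" r v])
    finally have "(transpose_mat C *\<^sub>v v) \<bullet> (transpose_mat C *\<^sub>v v) = 0" using v by simp
    then have "transpose_mat C *\<^sub>v v = 0\<^sub>v n" using conjugate_square_eq_0_vec[OF w] by simp
    then have "v = 0\<^sub>v r" using gram_inj[OF Cc rk' v(1)] by auto
    then show False using v by auto
  qed
  then have "G \<in> Units (ring_mat TYPE(real) r ())" using det_non_zero_imp_unit[OF Gc] by auto
  then obtain B where B: "mat_inverse G = Some B" using mat_inverse(1)[OF Gc] by fastforce
  then have GB: "G * B = 1\<^sub>m r" "B * G = 1\<^sub>m r" "B \<in> carrier_mat r r" using mat_inverse(2)[OF Gc] by auto
  have BT: "transpose_mat B = B"
  proof -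
    have "transpose_mat B * G = 1\<^sub>m r"
      using transpose_mult[OF Gc GB(3)] GB GT by (metis transpose_one)
    then have "transpose_mat B = transpose_mat B * (G * B)" using GB by auto
    also have "\<dots> = (transpose_mat B * G) * B" using GB Gc
      by (metis assoc_mult_mat transpose_carrier_mat)
    also have "\<dots> = B" using \<open>transpose_mat B * G = 1\<^sub>m r\<close> GB by auto
    finally show ?thesis .
  qed
  have P: "proj_mat C = transpose_mat C * B * C" unfolding proj_mat_def G_def[symmetric] using B by simp
  have Pc: "proj_mat C \<in> carrier_mat n n" unfolding P using Cc GB by auto
  have CB: "transpose_mat C * B \<in> carrier_mat n r" using Cc GB by auto
  have PT: "transpose_mat (proj_mat C) = proj_mat C" unfolding P
  proof -
    have "transpose_mat (transpose_mat C * B * C) = transpose_mat C * transpose_mat (transpose_mat C * B)"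
      by (rule transpose_mult[OF CB Cc])
    also have "transpose_mat (transpose_mat C * B) = transpose_mat B * C"
      using transpose_mult[of "transpose_mat C" n r B r] Cc GB by simp
    finally show "transpose_mat (transpose_mat C * B * C) = transpose_mat C * B * C"
      using BT Cc GB by (simp add: assoc_mult_mat[of _ n r _ r _ n])
  qed
  define M where "M = transpose_mat C * B"
  have Mc: "M \<in> carrier_mat n r" using CB unfolding M_def .
  have CM: "C * M = 1\<^sub>m r" unfolding M_def G_def[symmetric] using Cc GB
    by (metis G_def assoc_mult_mat transpose_carrier_mat)
  have "proj_mat C * proj_mat C = M * C * (M * C)" unfolding P M_def ..
  also have "\<dots> = M * (C * (M * C))" using Mc Cc by (meson assoc_mult_mat mult_carrier_mat)
  also have "C * (M * C) = (C * M) * C" using Mc Cc by (metis assoc_mult_mat)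
  also have "\<dots> = C" using CM Cc by simp
  finally have "proj_mat C * proj_mat C = proj_mat C" unfolding P M_def .
  then show ?thesis using Pc PT by auto
qed


lemma compact_pos:
  fixes D :: "('k \<Rightarrow> real) \<Rightarrow> real" and Z :: "('k \<Rightarrow> real) set"
  assumes K: "finite K" and Z: "closed Z" and D: "continuous_on UNIV D"
    and pos: "\<And>f. f \<in> Z \<Longrightarrow> (\<forall>k. k \<notin> K \<longrightarrow> f k = 0) \<Longrightarrow> (\<Sum>k\<in>K. (f k)^2) = 1 \<Longrightarrow> D f > 0"
  shows "\<exists>e>0. \<forall>f\<in>Z. (\<forall>k. k \<notin> K \<longrightarrow> f k = 0) \<longrightarrow> (\<Sum>k\<in>K. (f k)^2) = 1 \<longrightarrow> D f \<ge> e"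
proof -
  define S where "S = Z \<inter> {f. \<forall>k. k \<notin> K \<longrightarrow> f k = 0} \<inter> {f. (\<Sum>k\<in>K. (f k)^2) = 1}"
  define B where "B = PiE UNIV (\<lambda>k. if k \<in> K then {-1..1::real} else {0})"
  have "compactin (product_topology (\<lambda>_. euclideanreal) UNIV) B"
    unfolding B_def by (subst compactin_PiE) auto
  then have cB: "compact B" by (simp add: euclidean_product_topology compactin_euclidean_iff)
  have SB: "S \<subseteq> B"
  proof
    fix f assume f: "f \<in> S"
    have "\<bar>f k\<bar> \<le> 1" if k: "k \<in> K" for k
    proof -
      have "(f k)^2 \<le> (\<Sum>k\<in>K. (f k)^2)" by (rule member_le_sum) (use k K in auto)
      then have "(f k)^2 \<le> 1" using f unfolding S_def by auto
      then show ?thesis by (metis abs_le_square_iff abs_one power_one)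
    qed
    then show "f \<in> B" using f unfolding S_def B_def by (auto simp: abs_le_iff)
  qed
  have c1: "closed {f::'k \<Rightarrow> real. \<forall>k. k \<notin> K \<longrightarrow> f k = 0}"
  proof (rule closed_Collect_all)
    fix k
    show "closed {f::'k \<Rightarrow> real. k \<notin> K \<longrightarrow> f k = 0}"
    proof (cases "k \<in> K")
      case True then show ?thesis by simp
    next
      case False
      have "closed {f::'k \<Rightarrow> real. f k = (\<lambda>_. 0) f}"
        by (rule closed_Collect_eq) (auto intro: continuous_on_const)
      then show ?thesis using False by simp
    qed
  qed
  have c2: "closed {f::'k \<Rightarrow> real. (\<Sum>k\<in>K. (f k)^2) = 1}"
    by (rule closed_Collect_eq) (auto intro!: continuous_intros)
  have "closed S" unfolding S_def using Z c1 c2 by (intro closed_Int)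
  then have cS: "compact S" using compact_Int_closed[OF cB, of S] SB by (simp add: Int_absorb1)
  show ?thesis
  proof (cases "S = {}")
    case True
    then show ?thesis unfolding S_def by (intro exI[of _ 1]) auto
  next
    case False
    obtain f0 where f0: "f0 \<in> S" "\<forall>f\<in>S. D f0 \<le> D f"
      using continuous_attains_inf[OF cS False continuous_on_subset[OF D]] by auto
    have "D f0 > 0" using f0(1) pos unfolding S_def by auto
    then show ?thesis using f0(2) unfolding S_def by (intro exI[of _ "D f0"]) auto
  qed
qed


definition ip :: "nat \<Rightarrow> (nat \<Rightarrow> real) \<Rightarrow> (nat \<Rightarrow> real) \<Rightarrow> real" where
  "ip n a b = (\<Sum>j<n. a j * b j)"
definition app :: "nat \<Rightarrow> (nat \<Rightarrow> nat \<Rightarrow> real) \<Rightarrow> (nat \<Rightarrow> real) \<Rightarrow> nat \<Rightarrow> real" where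
  "app n q a j = (\<Sum>l<n. q j l * a l)"

lemma ip_cong: "(\<And>j. j < n \<Longrightarrow> a j = a' j) \<Longrightarrow> (\<And>j. j < n \<Longrightarrow> b j = b' j) \<Longrightarrow> ip n a b = ip n a' b'"
  unfolding ip_def by (rule sum.cong) auto
lemma app_cong: "(\<And>l. l < n \<Longrightarrow> a l = a' l) \<Longrightarrow> app n q a j = app n q a' j"
  unfolding app_def by (rule sum.cong) auto
lemma app_lin: "app n q (\<lambda>l. c * a l + d * b l) j = c * app n q a j + d * app n q b j"
  unfolding app_def by (simp add: sum.distrib sum_distrib_left algebra_simps)
lemma app_diff: "app n q (\<lambda>l. a l - b l) j = app n q a j - app n q b j"
  unfolding app_def by (simp add: sum_subtractf algebra_simps)
lemma ip_nonneg: "ip n a a \<ge> 0"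
  unfolding ip_def by (auto intro: sum_nonneg)
lemma ip_zero: "ip n a a = 0 \<Longrightarrow> j < n \<Longrightarrow> a j = 0"
  unfolding ip_def by (subst (asm) sum_nonneg_eq_0_iff) auto

lemma ip_app_sym:
  assumes sym: "\<And>j l. j < n \<Longrightarrow> l < n \<Longrightarrow> q j l = q l j"
  shows "ip n a (app n q b) = ip n (app n q a) b"
proof -
  have "ip n a (app n q b) = (\<Sum>j<n. \<Sum>l<n. a j * q j l * b l)"
    unfolding ip_def app_def by (simp add: sum_distrib_left mult.assoc)
  also have "\<dots> = (\<Sum>l<n. \<Sum>j<n. a j * q j l * b l)" by (rule sum.swap)
  also have "\<dots> = (\<Sum>l<n. \<Sum>j<n. q l j * a j * b l)"
    by (intro sum.cong refl) (simp add: sym)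
  also have "\<dots> = ip n (app n q a) b"
    unfolding ip_def app_def by (simp add: sum_distrib_right)
  finally show ?thesis .
qed

lemma app_app:
  assumes idem: "\<And>j k. j < n \<Longrightarrow> k < n \<Longrightarrow> (\<Sum>l<n. q j l * q l k) = q j k" and j: "j < n"
  shows "app n q (app n q b) j = app n q b j"
proof -
  have "app n q (app n q b) j = (\<Sum>l<n. \<Sum>k<n. q j l * q l k * b k)"
    unfolding app_def by (simp add: sum_distrib_left mult.assoc)
  also have "\<dots> = (\<Sum>k<n. \<Sum>l<n. q j l * q l k * b k)" by (rule sum.swap)
  also have "\<dots> = (\<Sum>k<n. q j k * b k)"
    by (intro sum.cong refl) (simp add: idem j flip: sum_distrib_right)
  finally show ?thesis unfolding app_def .
qed

lemma step_id:
  assumes sym: "\<And>j l. j < n \<Longrightarrow> l < n \<Longrightarrow> q j l = q l j"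
    and idem: "\<And>j k. j < n \<Longrightarrow> k < n \<Longrightarrow> (\<Sum>l<n. q j l * q l k) = q j k"
    and a: "\<And>j. j < n \<Longrightarrow> app n q a j = a j"
  shows "ip n (\<lambda>j. a j / 2 + app n q b j / 2) (\<lambda>j. a j / 2 + app n q b j / 2)
     = ip n a a / 2 + ip n b b / 2 - ip n (\<lambda>j. a j - b j) (\<lambda>j. a j - b j) / 4
       - ip n (\<lambda>j. b j - app n q b j) (\<lambda>j. b j - app n q b j) / 4"
proof -
  have "ip n (app n q a) b = ip n a b" by (rule ip_cong) (auto simp: a)
  moreover have "ip n a (app n q b) = ip n (app n q a) b" by (rule ip_app_sym) (simp add: sym)
  ultimately have s1: "ip n a (app n q b) = ip n a b" by simp
  have "ip n (app n q (app n q b)) b = ip n (app n q b) b"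
    by (rule ip_cong) (auto simp: app_app[OF idem])
  moreover have "ip n (app n q b) (app n q b) = ip n (app n q (app n q b)) b"
    by (rule ip_app_sym) (simp add: sym)
  moreover have "ip n (app n q b) b = ip n b (app n q b)" unfolding ip_def by (simp add: mult.commute)
  ultimately have s2: "ip n (app n q b) (app n q b) = ip n b (app n q b)" by simp
  define pb where "pb = app n q b"
  have e1: "ip n (\<lambda>j. a j / 2 + pb j / 2) (\<lambda>j. a j / 2 + pb j / 2)
      = ip n a a / 4 + ip n a pb / 2 + ip n pb pb / 4"
  proof -
    have "ip n (\<lambda>j. a j / 2 + pb j / 2) (\<lambda>j. a j / 2 + pb j / 2)
       = (\<Sum>j<n. a j * a j / 4 + a j * pb j / 2 + pb j * pb j / 4)"
      unfolding ip_def by (rule sum.cong) (simp_all add: algebra_simps)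
    also have "\<dots> = ip n a a / 4 + ip n a pb / 2 + ip n pb pb / 4"
      unfolding ip_def by (simp add: sum.distrib sum_divide_distrib)
    finally show ?thesis .
  qed
  have e2: "ip n (\<lambda>j. a j - b j) (\<lambda>j. a j - b j) = ip n a a - 2 * ip n a b + ip n b b"
  proof -
    have "ip n (\<lambda>j. a j - b j) (\<lambda>j. a j - b j) = (\<Sum>j<n. a j * a j - 2 * (a j * b j) + b j * b j)"
      unfolding ip_def by (rule sum.cong) (simp_all add: algebra_simps)
    also have "\<dots> = ip n a a - 2 * ip n a b + ip n b b"
      unfolding ip_def by (simp add: sum.distrib sum_subtractf sum_distrib_left)
    finally show ?thesis .
  qed
  have e3: "ip n (\<lambda>j. b j - pb j) (\<lambda>j. b j - pb j) = ip n b b - 2 * ip n b pb + ip n pb pb"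
  proof -
    have "ip n (\<lambda>j. b j - pb j) (\<lambda>j. b j - pb j) = (\<Sum>j<n. b j * b j - 2 * (b j * pb j) + pb j * pb j)"
      unfolding ip_def by (rule sum.cong) (simp_all add: algebra_simps)
    also have "\<dots> = ip n b b - 2 * ip n b pb + ip n pb pb"
      unfolding ip_def by (simp add: sum.distrib sum_subtractf sum_distrib_left)
    finally show ?thesis .
  qed
  show ?thesis using e1 e2 e3 s1 s2 unfolding pb_def[symmetric] by (simp add: algebra_simps)
qed


locale cyc =
  fixes n m :: nat and p :: "nat \<Rightarrow> nat \<Rightarrow> nat \<Rightarrow> real"
  assumes m2: "m \<ge> 2"
    and psym: "\<And>i j l. i \<in> {1..m} \<Longrightarrow> j < n \<Longrightarrow> l < n \<Longrightarrow> p i j l = p i l j"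
    and pidem: "\<And>i j k. i \<in> {1..m} \<Longrightarrow> j < n \<Longrightarrow> k < n \<Longrightarrow> (\<Sum>l<n. p i j l * p i l k) = p i j k"
begin

abbreviation "I \<equiv> {1..m}"
abbreviation "pr \<equiv> cyc_prev m"

definition W :: "(nat \<Rightarrow> nat \<Rightarrow> real) \<Rightarrow> bool" where
  "W u \<longleftrightarrow> (\<forall>i\<in>I. \<forall>j<n. app n (p i) (u i) j = u i j)"
definition Dset :: "(nat \<Rightarrow> real) set" where
  "Dset = {d. \<forall>i\<in>I. \<forall>j<n. app n (p i) d j = d j}"
definition U :: "(nat \<Rightarrow> nat \<Rightarrow> real) \<Rightarrow> bool" where
  "U u \<longleftrightarrow> W u \<and> (\<forall>d\<in>Dset. (\<Sum>i\<in>I. ip n (u i) d) = 0)"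
definition Tm :: "(nat \<Rightarrow> nat \<Rightarrow> real) \<Rightarrow> nat \<Rightarrow> nat \<Rightarrow> real" where
  "Tm u = (\<lambda>i j. if i \<in> I \<and> j < n then u i j - 1/2 * app n (p i) (\<lambda>l. u i l - u (pr i) l) j else 0)"
definition En :: "(nat \<Rightarrow> nat \<Rightarrow> real) \<Rightarrow> real" where
  "En u = (\<Sum>i\<in>I. ip n (u i) (u i))"
definition Dl :: "(nat \<Rightarrow> nat \<Rightarrow> real) \<Rightarrow> real" where
  "Dl u = (\<Sum>i\<in>I. ip n (\<lambda>j. u i j - u (pr i) j) (\<lambda>j. u i j - u (pr i) j)
      + ip n (\<lambda>j. u (pr i) j - app n (p i) (u (pr i)) j) (\<lambda>j. u (pr i) j - app n (p i) (u (pr i)) j))"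

lemma pr_in: "i \<in> I \<Longrightarrow> pr i \<in> I"
  using m2 unfolding cyc_prev_def by auto

lemma sum_pr: "(\<Sum>i\<in>I. g (pr i)) = (\<Sum>i\<in>I. g i)"
proof -
  have "bij_betw pr I I"
  proof (rule bij_betw_imageI)
    show "inj_on pr I" unfolding inj_on_def cyc_prev_def using m2 by auto
    show "pr ` I = I"
    proof
      show "pr ` I \<subseteq> I" using pr_in by auto
      show "I \<subseteq> pr ` I"
      proof
        fix k assume k: "k \<in> I"
        show "k \<in> pr ` I"
        proof (cases "k = m")
          case True
          then have "pr 1 = k" unfolding cyc_prev_def by simp
          then show ?thesis using m2 by (metis atLeastAtMost_iff image_eqI le_numeral_extra(4) one_le_numeral order_trans)
        next
          case False
          then have "pr (k+1) = k" "k + 1 \<in> I" using k unfolding cyc_prev_def by auto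
          then show ?thesis by (metis image_eqI)
        qed
      qed
    qed
  qed
  then show ?thesis by (rule sum.reindex_bij_betw)
qed

lemma Tm_form: "W u \<Longrightarrow> i \<in> I \<Longrightarrow> j < n \<Longrightarrow> Tm u i j = u i j / 2 + app n (p i) (u (pr i)) j / 2"
  unfolding Tm_def W_def by (simp add: app_diff field_simps)

lemma En_Tm: assumes "W u" shows "En (Tm u) = En u - Dl u / 4"
proof -
  have "En (Tm u) = (\<Sum>i\<in>I. ip n (\<lambda>j. u i j / 2 + app n (p i) (u (pr i)) j / 2)
                                  (\<lambda>j. u i j / 2 + app n (p i) (u (pr i)) j / 2))"
    unfolding En_def by (intro sum.cong refl ip_cong) (auto simp: Tm_form[OF assms])
  also have "\<dots> = (\<Sum>i\<in>I. ip n (u i) (u i) / 2 + ip n (u (pr i)) (u (pr i)) / 2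
      - ip n (\<lambda>j. u i j - u (pr i) j) (\<lambda>j. u i j - u (pr i) j) / 4
      - ip n (\<lambda>j. u (pr i) j - app n (p i) (u (pr i)) j) (\<lambda>j. u (pr i) j - app n (p i) (u (pr i)) j) / 4)"
  proof (intro sum.cong refl)
    fix i assume i: "i \<in> I"
    show "ip n (\<lambda>j. u i j / 2 + app n (p i) (u (pr i)) j / 2) (\<lambda>j. u i j / 2 + app n (p i) (u (pr i)) j / 2) =
      ip n (u i) (u i) / 2 + ip n (u (pr i)) (u (pr i)) / 2
      - ip n (\<lambda>j. u i j - u (pr i) j) (\<lambda>j. u i j - u (pr i) j) / 4
      - ip n (\<lambda>j. u (pr i) j - app n (p i) (u (pr i)) j) (\<lambda>j. u (pr i) j - app n (p i) (u (pr i)) j) / 4"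
      by (rule step_id) (use i assms psym pidem in \<open>auto simp: W_def\<close>)
  qed
  also have "\<dots> = En u / 2 + (\<Sum>i\<in>I. ip n (u (pr i)) (u (pr i))) / 2 - Dl u / 4"
    unfolding En_def Dl_def
    by (simp add: sum_subtractf sum.distrib add_divide_distrib flip: sum_divide_distrib)
  also have "(\<Sum>i\<in>I. ip n (u (pr i)) (u (pr i))) = En u"
    unfolding En_def by (rule sum_pr)
  finally show ?thesis by simp
qed

lemma En_nonneg: "En u \<ge> 0"
  unfolding En_def by (auto intro: sum_nonneg ip_nonneg)
lemma Dl_nonneg: "Dl u \<ge> 0"
  unfolding Dl_def by (auto intro!: sum_nonneg add_nonneg_nonneg ip_nonneg)

lemma Dl_zero:
  assumes "Dl u = 0"
  shows "\<forall>i\<in>I. \<forall>j<n. u i j = u 1 j" and "u 1 \<in> Dset"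
proof -
  have terms: "\<And>i. i \<in> I \<Longrightarrow> ip n (\<lambda>j. u i j - u (pr i) j) (\<lambda>j. u i j - u (pr i) j)
      + ip n (\<lambda>j. u (pr i) j - app n (p i) (u (pr i)) j) (\<lambda>j. u (pr i) j - app n (p i) (u (pr i)) j) = 0"
    using assms unfolding Dl_def by (subst (asm) sum_nonneg_eq_0_iff) (auto intro!: add_nonneg_nonneg ip_nonneg)
  have eq: "\<And>i j. i \<in> I \<Longrightarrow> j < n \<Longrightarrow> u i j = u (pr i) j"
  proof -
    fix i j assume i: "i \<in> I" and j: "j < n"
    have "ip n (\<lambda>j. u i j - u (pr i) j) (\<lambda>j. u i j - u (pr i) j) = 0"
      using terms[OF i] ip_nonneg by (smt (verit))
    from ip_zero[OF this j] show "u i j = u (pr i) j" by simp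
  qed
  have fix': "\<And>i j. i \<in> I \<Longrightarrow> j < n \<Longrightarrow> app n (p i) (u (pr i)) j = u (pr i) j"
  proof -
    fix i j assume i: "i \<in> I" and j: "j < n"
    have "ip n (\<lambda>j. u (pr i) j - app n (p i) (u (pr i)) j) (\<lambda>j. u (pr i) j - app n (p i) (u (pr i)) j) = 0"
      using terms[OF i] ip_nonneg by (smt (verit))
    from ip_zero[OF this j] show "app n (p i) (u (pr i)) j = u (pr i) j" by simp
  qed
  have all: "\<forall>j<n. u i j = u 1 j" if "1 \<le> i" "i \<le> m" for i
    using that
  proof (induction i)
    case 0 then show ?case by simp
  next
    case (Suc k)
    show ?case
    proof (cases "k = 0")
      case True then show ?thesis by simp
    next
      case False
      then have "pr (Suc k) = k" unfolding cyc_prev_def by simp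
      have ih: "\<forall>j<n. u k j = u 1 j" using Suc.IH Suc.prems False by simp
      have "Suc k \<in> I" using Suc.prems by simp
      then have "\<forall>j<n. u (Suc k) j = u k j" using eq[of "Suc k"] \<open>pr (Suc k) = k\<close> by simp
      then show ?thesis using ih by simp
    qed
  qed
  then show all': "\<forall>i\<in>I. \<forall>j<n. u i j = u 1 j" by (meson atLeastAtMost_iff)
  show "u 1 \<in> Dset" unfolding Dset_def
  proof (intro CollectI ballI allI impI)
    fix i j assume i: "i \<in> I" and j: "j < n"
    have "app n (p i) (u 1) j = app n (p i) (u (pr i)) j"
      by (rule app_cong) (metis all' pr_in[OF i])
    also have "\<dots> = u (pr i) j" using fix'[OF i j] .
    also have "\<dots> = u 1 j" by (metis all' pr_in[OF i] j)
    finally show "app n (p i) (u 1) j = u 1 j" .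
  qed
qed

lemma pos_U: assumes "U u" "Dl u = 0" shows "En u = 0"
proof -
  note z = Dl_zero[OF assms(2)]
  have "En u = (\<Sum>i\<in>I. ip n (u 1) (u 1))"
    unfolding En_def by (intro sum.cong refl ip_cong) (metis z(1))+
  also have "(\<Sum>i\<in>I. ip n (u 1) (u 1)) = (\<Sum>i\<in>I. ip n (u i) (u 1))"
    by (intro sum.cong refl ip_cong) (metis z(1))+
  also have "\<dots> = 0" using assms(1) z(2) unfolding U_def by auto
  finally show ?thesis .
qed

lemma Tm_W: assumes "W u" shows "W (Tm u)"
  unfolding W_def
proof (intro ballI allI impI)
  fix i j assume i: "i \<in> I" and j: "j < n"
  have "app n (p i) (Tm u i) j = app n (p i) (\<lambda>l. 1/2 * u i l + 1/2 * app n (p i) (u (pr i)) l) j"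
    by (rule app_cong) (simp add: Tm_form[OF assms i])
  also have "\<dots> = 1/2 * app n (p i) (u i) j + 1/2 * app n (p i) (app n (p i) (u (pr i))) j"
    by (rule app_lin)
  also have "\<dots> = 1/2 * u i j + 1/2 * app n (p i) (u (pr i)) j"
    using assms i j app_app[of n "p i" j "u (pr i)"] pidem[OF i] unfolding W_def by auto
  also have "\<dots> = Tm u i j" using Tm_form[OF assms i j] by simp
  finally show "app n (p i) (Tm u i) j = Tm u i j" .
qed

lemma Tm_D: assumes "W u" "d \<in> Dset" shows "(\<Sum>i\<in>I. ip n (Tm u i) d) = (\<Sum>i\<in>I. ip n (u i) d)"
proof -
  have "(\<Sum>i\<in>I. ip n (Tm u i) d) = (\<Sum>i\<in>I. ip n (u i) d / 2 + ip n (u (pr i)) d / 2)"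
  proof (intro sum.cong refl)
    fix i assume i: "i \<in> I"
    have "ip n (Tm u i) d = ip n (\<lambda>j. u i j / 2 + app n (p i) (u (pr i)) j / 2) d"
      by (rule ip_cong) (simp_all add: Tm_form[OF assms(1) i])
    also have "\<dots> = ip n (u i) d / 2 + ip n (app n (p i) (u (pr i))) d / 2"
      unfolding ip_def by (simp add: sum_divide_distrib sum.distrib algebra_simps)
    also have "ip n (app n (p i) (u (pr i))) d = ip n (u (pr i)) (app n (p i) d)"
      using ip_app_sym[of n "p i" "u (pr i)" d] psym[OF i] unfolding ip_def
      by (simp add: mult.commute)
    also have "\<dots> = ip n (u (pr i)) d"
      by (rule ip_cong) (use assms(2) i in \<open>auto simp: Dset_def\<close>)
    finally show "ip n (Tm u i) d = ip n (u i) d / 2 + ip n (u (pr i)) d / 2" .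
  qed
  also have "\<dots> = (\<Sum>i\<in>I. ip n (u i) d) / 2 + (\<Sum>i\<in>I. ip n (u (pr i)) d) / 2"
    by (simp add: sum.distrib sum_divide_distrib)
  also have "(\<Sum>i\<in>I. ip n (u (pr i)) d) = (\<Sum>i\<in>I. ip n (u i) d)" by (rule sum_pr)
  finally show ?thesis by simp
qed

lemma Tm_U: "U u \<Longrightarrow> U (Tm u)"
  unfolding U_def using Tm_W Tm_D by auto

lemma W_diff: "W a \<Longrightarrow> W b \<Longrightarrow> W (\<lambda>i j. a i j - b i j)"
  unfolding W_def by (simp add: app_diff)

lemma Tm_diff: "Tm (\<lambda>i j. a i j - b i j) = (\<lambda>i j. Tm a i j - Tm b i j)"
proof (intro ext)
  fix i j
  have h: "app n (p i) (\<lambda>l. a i l - b i l - (a (pr i) l - b (pr i) l)) j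
    = (app n (p i) (a i) j - app n (p i) (b i) j) - (app n (p i) (a (pr i)) j - app n (p i) (b (pr i)) j)"
    by (simp only: app_diff)
  have h1: "app n (p i) (\<lambda>l. a i l - a (pr i) l) j = app n (p i) (a i) j - app n (p i) (a (pr i)) j"
    by (simp only: app_diff)
  have h2: "app n (p i) (\<lambda>l. b i l - b (pr i) l) j = app n (p i) (b i) j - app n (p i) (b (pr i)) j"
    by (simp only: app_diff)
  show "Tm (\<lambda>i j. a i j - b i j) i j = Tm a i j - Tm b i j"
    unfolding Tm_def by (simp only: h h1 h2) (simp add: algebra_simps)
qed

lemma ip_diff_left: "ip n (\<lambda>j. a j - b j) d = ip n a d - ip n b d"
  unfolding ip_def by (simp add: sum_subtractf algebra_simps)

lemma U_step0: assumes "W u" shows "U (\<lambda>i j. Tm u i j - u i j)"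
  unfolding U_def
proof
  show "W (\<lambda>i j. Tm u i j - u i j)" using W_diff Tm_W assms by auto
  show "\<forall>d\<in>Dset. (\<Sum>i\<in>I. ip n (\<lambda>j. Tm u i j - u i j) d) = 0"
    using Tm_D[OF assms] by (simp add: ip_diff_left sum_subtractf)
qed

lemma ip_sq_scale: "ip n (\<lambda>j. c * a j) (\<lambda>j. c * a j) = c^2 * ip n a a"
  unfolding ip_def by (simp add: sum_distrib_left power2_eq_square mult_ac)

lemma En_scale: "En (\<lambda>i j. c * u i j) = c^2 * En u"
  unfolding En_def ip_sq_scale by (simp add: sum_distrib_left)

lemma Dl_scale: "Dl (\<lambda>i j. c * u i j) = c^2 * Dl u"
proof -
  have a: "app n q (\<lambda>l. c * b l) j = c * app n q b j" for q b j
    unfolding app_def by (simp add: sum_distrib_left mult_ac)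
  have "Dl (\<lambda>i j. c * u i j) = (\<Sum>i\<in>I. ip n (\<lambda>j. c * (u i j - u (pr i) j)) (\<lambda>j. c * (u i j - u (pr i) j))
      + ip n (\<lambda>j. c * (u (pr i) j - app n (p i) (u (pr i)) j)) (\<lambda>j. c * (u (pr i) j - app n (p i) (u (pr i)) j)))"
    unfolding Dl_def a by (simp only: right_diff_distrib)
  also have "\<dots> = c^2 * Dl u" by (simp only: Dl_def ip_sq_scale sum_distrib_left distrib_left)
  finally show ?thesis .
qed

lemma U_scale: "U u \<Longrightarrow> U (\<lambda>i j. c * u i j)"
proof -
  have a: "app n q (\<lambda>l. c * b l) j = c * app n q b j" for q b j
    unfolding app_def by (simp add: sum_distrib_left mult_ac)
  have b: "ip n (\<lambda>j. c * b j) d = c * ip n b d" for b d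
    unfolding ip_def by (simp add: sum_distrib_left mult_ac)
  assume u: "U u"
  have "W (\<lambda>i j. c * u i j)" using u unfolding U_def W_def by (simp add: a)
  moreover have "(\<Sum>i\<in>I. ip n (\<lambda>j. c * u i j) d) = 0" if "d \<in> Dset" for d
  proof -
    have "(\<Sum>i\<in>I. ip n (\<lambda>j. c * u i j) d) = c * (\<Sum>i\<in>I. ip n (u i) d)"
      by (simp only: b sum_distrib_left)
    then show ?thesis using u that unfolding U_def by simp
  qed
  ultimately show ?thesis unfolding U_def by auto
qed

end


lemma geom_limit:
  fixes s :: "nat \<Rightarrow> real"
  assumes r: "0 \<le> r" "r < 1" and d: "\<And>t. \<bar>s (Suc t) - s t\<bar> \<le> c * r^t"
  shows "\<exists>l. \<forall>t. \<bar>s t - l\<bar> \<le> c * r^t / (1 - r)"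
proof -
  define d where "d t = s (Suc t) - s t" for t
  have c: "c \<ge> 0" using d[of 0] by auto
  have sg: "summable (\<lambda>t. c * r^t)" using r by (intro summable_mult summable_geometric) auto
  have sd: "summable d"
    by (rule summable_comparison_test[OF _ sg]) (use d in \<open>auto simp: d_def\<close>)
  define l where "l = s 0 + suminf d"
  have "\<bar>s t - l\<bar> \<le> c * r^t / (1 - r)" for t
  proof -
    have st: "s t = s 0 + (\<Sum>k<t. d k)" unfolding d_def by (simp add: sum_lessThan_telescope)
    have sp: "suminf d = (\<Sum>k. d (k + t)) + (\<Sum>k<t. d k)" by (rule suminf_split_initial_segment[OF sd])
    have e: "s t - l = - (\<Sum>k. d (k + t))" unfolding l_def using st sp by simp
    have sd': "summable (\<lambda>k. d (k + t))" using sd by (rule summable_ignore_initial_segment)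
    have sg': "summable (\<lambda>k. c * r^t * r^k)" using r by (intro summable_mult summable_geometric) auto
    have g: "(\<Sum>k. c * r^t * r^k) = c * r^t / (1 - r)"
      using r by (simp add: suminf_mult suminf_geometric)
    have b: "\<bar>d (k + t)\<bar> \<le> c * r^t * r^k" for k
      using d[of "k + t"] unfolding d_def by (simp add: power_add mult_ac)
    have "(\<Sum>k. d (k + t)) \<le> (\<Sum>k. c * r^t * r^k)"
      by (rule suminf_le[OF _ sd' sg']) (use b in \<open>auto simp: abs_le_iff\<close>)
    moreover have "(\<Sum>k. - (c * r^t * r^k)) \<le> (\<Sum>k. d (k + t))"
      by (rule suminf_le[OF _ summable_minus[OF sg'] sd']) (metis abs_le_iff b minus_le_iff)
    ultimately show ?thesis using e g by (simp add: suminf_minus[OF sg'] abs_le_iff)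
  qed
  then show ?thesis by blast
qed

lemma le_geom_zero:
  fixes a :: real
  assumes r: "0 \<le> r" "r < 1" and b: "\<And>t. a \<le> K * r^t"
  shows "a \<le> 0"
proof -
  have "(\<lambda>t. K * r^t) \<longlonglongrightarrow> K * 0" using r by (intro tendsto_intros LIMSEQ_power_zero) auto
  then show ?thesis using b by (intro LIMSEQ_le_const[of "\<lambda>t. K * r^t"]) auto
qed

lemma closed_imp_const: "closed {x. P x} \<Longrightarrow> closed {x. Q \<longrightarrow> P x}"
  by (cases Q) auto

context cyc
begin

lemma unif: "\<exists>e>0. \<forall>u. U u \<longrightarrow> (\<forall>i j. \<not> (i \<in> I \<and> j < n) \<longrightarrow> u i j = 0) \<longrightarrow> Dl u \<ge> e * En u"
proof -
  define K where "K = I \<times> {..<n}"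
  define Z where "Z = {f :: nat \<times> nat \<Rightarrow> real. U (curry f)}"
  have contev: "continuous_on UNIV (\<lambda>f :: nat \<times> nat \<Rightarrow> real. f k)" for k
    by (rule continuous_on_product_coordinates)
  have Zeq: "Z = {f. \<forall>i. i \<in> I \<longrightarrow> (\<forall>j. j < n \<longrightarrow> (\<Sum>l<n. p i j l * f (i, l)) = f (i, j))}
     \<inter> {f. \<forall>d. d \<in> Dset \<longrightarrow> (\<Sum>i\<in>I. \<Sum>j<n. f (i, j) * d j) = 0}"
    unfolding Z_def U_def W_def app_def ip_def by auto
  have closedZ: "closed Z" unfolding Zeq
    by (intro closed_Int closed_Collect_all closed_imp_const closed_Collect_eq)
       (auto intro!: continuous_intros contev)
  have contD: "continuous_on UNIV (\<lambda>f :: nat \<times> nat \<Rightarrow> real. Dl (curry f))"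
    unfolding Dl_def ip_def app_def curry_def by (auto intro!: continuous_intros contev)
  have En_f: "En (curry f) = (\<Sum>k\<in>K. (f k)^2)" for f
    unfolding En_def ip_def K_def
    by (simp add: sum.cartesian_product power2_eq_square)
  have finK: "finite K" unfolding K_def by auto
  obtain e where e: "e > 0" and ee: "\<forall>f\<in>Z. (\<forall>k. k \<notin> K \<longrightarrow> f k = 0) \<longrightarrow> (\<Sum>k\<in>K. (f k)^2) = 1 \<longrightarrow> Dl (curry f) \<ge> e"
  proof -
    have "\<exists>e>0. \<forall>f\<in>Z. (\<forall>k. k \<notin> K \<longrightarrow> f k = 0) \<longrightarrow> (\<Sum>k\<in>K. (f k)^2) = 1 \<longrightarrow> Dl (curry f) \<ge> e"
    proof (rule compact_pos[OF finK closedZ contD])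
      fix f assume f: "f \<in> Z" "\<forall>k. k \<notin> K \<longrightarrow> f k = 0" "(\<Sum>k\<in>K. (f k)^2) = 1"
      show "Dl (curry f) > 0"
      proof (rule ccontr)
        assume "\<not> Dl (curry f) > 0"
        then have "Dl (curry f) = 0" using Dl_nonneg[of "curry f"] by auto
        then have "En (curry f) = 0" using pos_U f(1) unfolding Z_def by auto
        then show False using f(3) En_f by simp
      qed
    qed
    then show ?thesis using that by blast
  qed
  show ?thesis
  proof (intro exI[of _ e] conjI allI impI)
    show "e > 0" by fact
    fix u assume u: "U u" "\<forall>i j. \<not> (i \<in> I \<and> j < n) \<longrightarrow> u i j = 0"
    show "Dl u \<ge> e * En u"
    proof (cases "En u = 0")
      case True then show ?thesis using Dl_nonneg[of u] by simp
    next
      case False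
      then have Epos: "En u > 0" using En_nonneg[of u] by simp
      define c where "c = 1 / sqrt (En u)"
      define f where "f = (\<lambda>(i, j). c * u i j)"
      have cf: "curry f = (\<lambda>i j. c * u i j)" unfolding f_def by (auto simp: curry_def)
      have "f \<in> Z" unfolding Z_def using U_scale[OF u(1), of c] cf by simp
      moreover have "\<forall>k. k \<notin> K \<longrightarrow> f k = 0" using u(2) unfolding f_def K_def by auto
      moreover have "(\<Sum>k\<in>K. (f k)^2) = 1"
        unfolding En_f[symmetric] cf En_scale c_def using Epos by (simp add: power_divide)
      ultimately have "Dl (curry f) \<ge> e" using ee by blast
      then have "c^2 * Dl u \<ge> e" unfolding cf Dl_scale .
      then have "Dl u / En u \<ge> e" unfolding c_def using Epos by (simp add: power_divide)
      then show ?thesis using Epos by (simp add: field_simps)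
    qed
  qed
qed

end


context cyc
begin

lemma converge:
  fixes X :: "nat \<Rightarrow> nat \<Rightarrow> nat \<Rightarrow> real"
  assumes X0: "W (X 0)" and Xs: "\<And>t. X (Suc t) = Tm (X t)"
    and Xz: "\<And>i j. \<not> (i \<in> I \<and> j < n) \<Longrightarrow> X 0 i j = 0"
  shows "\<exists>L c r. c > 0 \<and> 0 \<le> r \<and> r < 1 \<and> (\<forall>i\<in>I. \<forall>t. sqrt (\<Sum>j<n. (X t i j - L j)^2) \<le> c * r^t)"
proof -
  have WX: "W (X t)" for t by (induction t) (use X0 Xs Tm_W in auto)
  have Xz': "\<not> (i \<in> I \<and> j < n) \<Longrightarrow> X t i j = 0" for t i j
    by (cases t) (use Xz Xs in \<open>auto simp: Tm_def\<close>)
  define u where "u t = (\<lambda>i j. X (Suc t) i j - X t i j)" for t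
  have uS: "u (Suc t) = Tm (u t)" for t
    unfolding u_def Tm_diff using Xs by simp
  have Uu: "U (u t)" for t
  proof (induction t)
    case 0 show ?case unfolding u_def Xs using U_step0[OF X0] by simp
  next
    case (Suc t) then show ?case using uS Tm_U by simp
  qed
  have uz: "\<forall>i j. \<not> (i \<in> I \<and> j < n) \<longrightarrow> u t i j = 0" for t
    unfolding u_def using Xz' by simp
  obtain e where e: "e > 0" "\<And>u. U u \<Longrightarrow> (\<forall>i j. \<not> (i \<in> I \<and> j < n) \<longrightarrow> u i j = 0) \<Longrightarrow> Dl u \<ge> e * En u"
    using unif by blast
  define q where "q = 1 - min e 1 / 4"
  have q: "0 \<le> q" "q < 1" unfolding q_def using e(1) by auto
  have dec: "En (u (Suc t)) \<le> q * En (u t)" for t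
  proof -
    have "En (u (Suc t)) = En (u t) - Dl (u t) / 4" unfolding uS by (rule En_Tm) (use Uu U_def in blast)
    moreover have "Dl (u t) \<ge> e * En (u t)" using e(2)[OF Uu uz] .
    moreover have "min e 1 * En (u t) \<le> e * En (u t)" using En_nonneg[of "u t"]
      by (intro mult_right_mono) auto
    ultimately show ?thesis unfolding q_def by (simp add: algebra_simps)
  qed
  have Ebound: "En (u t) \<le> q^t * En (u 0)" for t
  proof (induction t)
    case 0 then show ?case by simp
  next
    case (Suc t)
    have "En (u (Suc t)) \<le> q * En (u t)" by (rule dec)
    also have "\<dots> \<le> q * (q^t * En (u 0))" using Suc q by (intro mult_left_mono) auto
    finally show ?case by (simp add: mult_ac)
  qed
  define c0 where "c0 = sqrt (En (u 0))"
  define r where "r = sqrt q"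
  have r: "0 \<le> r" "r < 1" unfolding r_def using q by auto
  have c0: "c0 \<ge> 0" unfolding c0_def using En_nonneg by simp
  have ucomp: "\<bar>u t i j\<bar> \<le> c0 * r^t" if i: "i \<in> I" and j: "j < n" for t i j
  proof -
    have "(u t i j)^2 \<le> ip n (u t i) (u t i)"
      unfolding ip_def power2_eq_square by (rule member_le_sum) (use j in auto)
    also have "\<dots> \<le> En (u t)"
      unfolding En_def by (rule member_le_sum) (use i ip_nonneg in auto)
    also have "\<dots> \<le> q^t * En (u 0)" by (rule Ebound)
    also have "\<dots> = (c0 * r^t)^2"
    proof -
      have r2: "r^2 = q" unfolding r_def using q by simp
      have c2: "c0^2 = En (u 0)" unfolding c0_def using En_nonneg[of "u 0"] by simp
      have "(r^t)^2 = (r^2)^t" by (metis power_mult mult.commute)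
      then show ?thesis using r2 c2 by (simp add: power_mult_distrib mult.commute)
    qed
    finally have "(u t i j)^2 \<le> (c0 * r^t)^2" .
    from real_sqrt_le_mono[OF this] show ?thesis using c0 r by simp
  qed
  define B0 where "B0 = c0 / (1 - r)"
  have B0: "B0 \<ge> 0" unfolding B0_def using c0 r by auto
  have "\<forall>i j. \<exists>l. (i \<in> I \<and> j < n) \<longrightarrow> (\<forall>t. \<bar>X t i j - l\<bar> \<le> B0 * r^t)"
  proof (intro allI)
    fix i j
    show "\<exists>l. (i \<in> I \<and> j < n) \<longrightarrow> (\<forall>t. \<bar>X t i j - l\<bar> \<le> B0 * r^t)"
    proof (cases "i \<in> I \<and> j < n")
      case True
      have "\<exists>l. \<forall>t. \<bar>X t i j - l\<bar> \<le> c0 * r^t / (1 - r)"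
        by (rule geom_limit[OF r]) (use ucomp True in \<open>auto simp: u_def\<close>)
      then show ?thesis unfolding B0_def by (auto simp: field_simps)
    qed auto
  qed
  then obtain L where L: "\<And>i j t. i \<in> I \<Longrightarrow> j < n \<Longrightarrow> \<bar>X t i j - L i j\<bar> \<le> B0 * r^t"
    by metis
  have fixp: "app n (p i) (L (pr i)) j = L i j" if i: "i \<in> I" and j: "j < n" for i j
  proof -
    define M where "M = (\<Sum>l<n. \<bar>p i j l\<bar>)"
    have M: "M \<ge> 0" unfolding M_def by (auto intro: sum_nonneg)
    have pi: "pr i \<in> I" using pr_in[OF i] .
    have "\<bar>app n (p i) (L (pr i)) j - L i j\<bar> \<le> (M * B0 + 2 * c0 + B0) * r^t" for t
    proof -
      have sp: "app n (p i) (L (pr i)) j - L i j = app n (p i) (\<lambda>l. L (pr i) l - X t (pr i) l) j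
          + 2 * u t i j + (X t i j - L i j)"
        using Tm_form[OF WX i j, of t] unfolding u_def Xs app_diff by (simp add: algebra_simps)
      have a1: "\<bar>app n (p i) (\<lambda>l. L (pr i) l - X t (pr i) l) j\<bar> \<le> M * (B0 * r^t)"
      proof -
        have "\<bar>app n (p i) (\<lambda>l. L (pr i) l - X t (pr i) l) j\<bar>
            \<le> (\<Sum>l<n. \<bar>p i j l\<bar> * \<bar>L (pr i) l - X t (pr i) l\<bar>)"
          unfolding app_def by (rule order_trans[OF sum_abs]) (simp add: abs_mult)
        also have "\<dots> \<le> (\<Sum>l<n. \<bar>p i j l\<bar> * (B0 * r^t))"
          by (intro sum_mono mult_left_mono) (use L[OF pi] in \<open>auto simp: abs_minus_commute\<close>)
        finally show ?thesis unfolding M_def by (simp add: sum_distrib_right)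
      qed
      have a2: "\<bar>2 * u t i j\<bar> \<le> 2 * c0 * r^t" using ucomp[OF i j, of t] by simp
      have a3: "\<bar>X t i j - L i j\<bar> \<le> B0 * r^t" using L[OF i j] .
      show ?thesis unfolding sp using a1 a2 a3 by (simp add: algebra_simps)
    qed
    then have "\<bar>app n (p i) (L (pr i)) j - L i j\<bar> \<le> 0" by (intro le_geom_zero[OF r]) auto
    then show ?thesis by simp
  qed
  have WL: "W L" unfolding W_def
  proof (intro ballI allI impI)
    fix i j assume i: "i \<in> I" and j: "j < n"
    have "app n (p i) (L i) j = app n (p i) (app n (p i) (L (pr i))) j"
      by (rule app_cong) (use fixp i in simp)
    also have "\<dots> = app n (p i) (L (pr i)) j" by (rule app_app) (use pidem i j in auto)
    also have "\<dots> = L i j" by (rule fixp[OF i j])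
    finally show "app n (p i) (L i) j = L i j" .
  qed
  have TL: "Tm L i j = L i j" if "i \<in> I" "j < n" for i j
    using Tm_form[OF WL that] fixp[OF that] by simp
  have "En (Tm L) = En L" unfolding En_def
  proof (rule sum.cong[OF refl])
    fix i assume i: "i \<in> I"
    show "ip n (Tm L i) (Tm L i) = ip n (L i) (L i)" using TL[OF i] by (intro ip_cong) auto
  qed
  then have "En L - Dl L / 4 = En L" unfolding En_Tm[OF WL] .
  then have "Dl L = 0" by simp
  note Lc = Dl_zero(1)[OF this]
  have bnd: "\<forall>i\<in>I. \<forall>t. sqrt (\<Sum>j<n. (X t i j - L 1 j)^2) \<le> (sqrt (real n) * B0 + 1) * r^t"
  proof (intro ballI allI)
    fix i t assume i: "i \<in> I"
    have "(\<Sum>j<n. (X t i j - L 1 j)^2) \<le> (\<Sum>j<n. (B0 * r^t)^2)"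
    proof (rule sum_mono)
      fix j assume j: "j \<in> {..<n}"
      have jn: "j < n" using j by simp
      have e1: "L i j = L 1 j" using Lc i jn by blast
      have "\<bar>X t i j - L i j\<bar> \<le> B0 * r^t" by (rule L[OF i jn])
      then have "\<bar>X t i j - L 1 j\<bar> \<le> B0 * r^t" unfolding e1 .
      from power_mono[OF this abs_ge_zero, of 2]
      show "(X t i j - L 1 j)^2 \<le> (B0 * r^t)^2" by simp
    qed
    then have "sqrt (\<Sum>j<n. (X t i j - L 1 j)^2) \<le> sqrt (real n * (B0 * r^t)^2)" by simp
    also have "\<dots> = sqrt (real n) * (B0 * r^t)" using B0 r by (simp add: real_sqrt_mult)
    also have "\<dots> \<le> (sqrt (real n) * B0 + 1) * r^t" using r by (simp add: algebra_simps)
    finally show "sqrt (\<Sum>j<n. (X t i j - L 1 j)^2) \<le> (sqrt (real n) * B0 + 1) * r^t" .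
  qed
  have "sqrt (real n) * B0 + 1 > 0" using B0 by (simp add: add_nonneg_pos)
  then show ?thesis using bnd r by blast
qed

end

lemma mv_idx:
  fixes P :: "real mat"
  assumes "P \<in> carrier_mat n n" "v \<in> carrier_vec n" "j < n"
  shows "(P *\<^sub>v v) $ j = (\<Sum>l<n. P $$ (j, l) * v $ l)"
  using assms by (simp add: scalar_prod_def atLeast0LessThan)

theorem proposition1:
  fixes m n :: nat and C :: "nat \<Rightarrow> real mat" and x :: "nat \<Rightarrow> nat \<Rightarrow> real vec"
  assumes m2: "m \<ge> 2"
    and C: "\<forall>i\<in>{1..m}. dim_col (C i) = n \<and> full_row_rank (C i)"
    and init: "\<forall>i\<in>{1..m}. x i 0 \<in> carrier_vec n \<and> x i 0 \<in> mat_image (proj_mat (C i))"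
    and dyn: "\<forall>i\<in>{1..m}. \<forall>t. x i (Suc t) =
               x i t - (1/2) \<cdot>\<^sub>v (proj_mat (C i) *\<^sub>v (x i t - x (cyc_prev m i) t))"
  shows "\<exists>xs c \<rho>. xs \<in> carrier_vec n \<and> c > 0 \<and> 0 \<le> \<rho> \<and> \<rho> < 1 \<and>
           (\<forall>i\<in>{1..m}. \<forall>t. vnorm (x i t - xs) \<le> c * \<rho> ^ t)"
proof -
  define P where "P i = proj_mat (C i)" for i
  have Pp: "P i \<in> carrier_mat n n \<and> transpose_mat (P i) = P i \<and> P i * P i = P i" if i: "i \<in> {1..m}" for i
    unfolding P_def
  proof (rule proj_props)
    have "dim_col (C i) = n" using C i by blast
    then show "C i \<in> carrier_mat (dim_row (C i)) n" unfolding carrier_mat_def by blast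
    show "full_row_rank (C i)" using C i by blast
  qed
  define p where "p i j l = P i $$ (j, l)" for i j l
  interpret cyc n m p
  proof
    show "m \<ge> 2" by fact
    fix i j l assume i: "i \<in> {1..m}" and j: "j < n" and l: "l < n"
    have Pc: "P i \<in> carrier_mat n n" using Pp[OF i] by blast
    have "transpose_mat (P i) $$ (j, l) = P i $$ (l, j)" using Pc j l by simp
    then show "p i j l = p i l j" unfolding p_def using Pp[OF i] by metis
  next
    fix i j k assume i: "i \<in> {1..m}" and j: "j < n" and k: "k < n"
    have Pc: "P i \<in> carrier_mat n n" using Pp[OF i] by blast
    have "(P i * P i) $$ (j, k) = (\<Sum>l<n. P i $$ (j, l) * P i $$ (l, k))"
      using Pc j k by (simp add: scalar_prod_def atLeast0LessThan)
    then show "(\<Sum>l<n. p i j l * p i l k) = p i j k" unfolding p_def using Pp[OF i] by metis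
  qed
  have prI: "cyc_prev m i \<in> {1..m}" if "i \<in> {1..m}" for i using pr_in that .
  have xc: "\<forall>i\<in>{1..m}. x i t \<in> carrier_vec n" for t
  proof (induction t)
    case 0 then show ?case using init by auto
  next
    case (Suc t)
    show ?case
    proof
      fix i assume i: "i \<in> {1..m}"
      have a: "x i t \<in> carrier_vec n" "x (cyc_prev m i) t \<in> carrier_vec n" using Suc.IH i prI by auto
      have "x i (Suc t) = x i t - (1/2) \<cdot>\<^sub>v (P i *\<^sub>v (x i t - x (cyc_prev m i) t))"
        using dyn i unfolding P_def by auto
      then show "x i (Suc t) \<in> carrier_vec n" using a Pp[OF i] by auto
    qed
  qed
  define X where "X t i j = (if i \<in> {1..m} \<and> j < n then x i t $ j else 0)" for t i j
  have Xs: "X (Suc t) = Tm (X t)" for t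
  proof (intro ext)
    fix i j
    show "X (Suc t) i j = Tm (X t) i j"
    proof (cases "i \<in> {1..m} \<and> j < n")
      case False then show ?thesis unfolding X_def Tm_def by auto
    next
      case True
      then have i: "i \<in> {1..m}" and j: "j < n" by auto
      have a: "x i t \<in> carrier_vec n" "x (cyc_prev m i) t \<in> carrier_vec n" using xc i prI by auto
      have "x i (Suc t) $ j = x i t $ j - 1/2 * (P i *\<^sub>v (x i t - x (cyc_prev m i) t)) $ j"
        using dyn i j a Pp[OF i] unfolding P_def by auto
      also have "(P i *\<^sub>v (x i t - x (cyc_prev m i) t)) $ j
          = (\<Sum>l<n. P i $$ (j, l) * (x i t - x (cyc_prev m i) t) $ l)"
        by (rule mv_idx) (use a Pp[OF i] j in auto)
      also have "\<dots> = app n (p i) (\<lambda>l. X t i l - X t (cyc_prev m i) l) j"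
        unfolding app_def p_def X_def using a i prI[OF i] by (intro sum.cong) auto
      finally show ?thesis unfolding X_def Tm_def using i j by simp
    qed
  qed
  have X0: "W (X 0)" unfolding W_def
  proof (intro ballI allI impI)
    fix i j assume i: "i \<in> {1..m}" and j: "j < n"
    have Pc: "P i \<in> carrier_mat n n" using Pp[OF i] by blast
    have "x i 0 \<in> mat_image (P i)" using init i unfolding P_def by blast
    then obtain y where y0: "y \<in> carrier_vec (dim_col (P i))" "x i 0 = P i *\<^sub>v y"
      unfolding mat_image_def by blast
    have y: "y \<in> carrier_vec n" "x i 0 = P i *\<^sub>v y" using y0 Pc by auto
    have Px: "P i *\<^sub>v x i 0 = x i 0"
      using y Pp[OF i] by (metis assoc_mult_mat_vec)
    have "app n (p i) (X 0 i) j = (\<Sum>l<n. P i $$ (j, l) * x i 0 $ l)"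
      unfolding app_def p_def X_def using i by (intro sum.cong) auto
    also have "\<dots> = (P i *\<^sub>v x i 0) $ j" using xc i j Pp[OF i] by (intro mv_idx[symmetric]) auto
    also have "\<dots> = X 0 i j" using Px i j unfolding X_def by simp
    finally show "app n (p i) (X 0 i) j = X 0 i j" .
  qed
  have Xz: "X 0 i j = 0" if "\<not> (i \<in> {1..m} \<and> j < n)" for i j using that unfolding X_def by auto
  obtain L c r where Lcr: "c > 0" "0 \<le> r" "r < 1"
    "\<forall>i\<in>{1..m}. \<forall>t. sqrt (\<Sum>j<n. (X t i j - L j)^2) \<le> c * r^t"
    using converge[OF X0 Xs Xz] by blast
  define xs where "xs = vec n L"
  have vb: "vnorm (x i t - xs) \<le> c * r ^ t" if i: "i \<in> {1..m}" for i t
  proof -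
    have xi: "x i t \<in> carrier_vec n" using xc i by auto
    have "vnorm (x i t - xs) = sqrt (\<Sum>j<n. (X t i j - L j)^2)"
      unfolding vnorm_def X_def xs_def using xi i by (intro arg_cong[where f=sqrt] sum.cong) auto
    then show ?thesis using Lcr(4) i by auto
  qed
  have xsc: "xs \<in> carrier_vec n" unfolding xs_def by simp
  show ?thesis
    by (rule exI[of _ xs], rule exI[of _ c], rule exI[of _ r]) (use xsc Lcr(1-3) vb in blast)
qed

end
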